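(* Let $F:\mathbb{R}\to\mathbb{R}$ be a Darboux function. Then there is a continuous function $g:\mathbb{R}\to\mathbb{R}$ which is not constant such that $F+g$ is a Darboux function.
   Context: A function $F:\mathbb{R}\to\mathbb{R}$ is Darboux if it maps every connected set to a connected set; equivalently, the image under $F$ of every interval is an interval. *)

theory Defs
  imports "HOL-Analysis.Analysis"
begin

definition darboux :: "(real \<Rightarrow> real) \<Rightarrow> bool" where
  "darboux F \<longleftrightarrow> (\<forall>S::real set. connected S \<longrightarrow> connected (F ` S))"

end

theory Submission
  imports Defs
begin

definition goodU :: "(nat \<Rightarrow> real set) \<Rightarrow> bool" where
  "goodU U \<longleftrightarrow> (\<forall>n. open (U n)) \<and> (\<forall>n a b. a < b \<longrightarrow> (\<exists>x. a < x \<and> x < b \<and> x \<in> U n))"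

lemma sub_in_open:
  fixes a b x :: real
  assumes "open V" "a < x" "x < b" "x \<in> V"
  shows "\<exists>a' b'. a < a' \<and> a' < b' \<and> b' < b \<and> {a'..b'} \<subseteq> V"
proof -
  obtain e where e: "e > 0" "ball x e \<subseteq> V" using assms open_contains_ball by blast
  define d where "d = min e (min (x - a) (b - x)) / 2"
  have d: "d > 0" "d < e" "d < x - a" "d < b - x" using e assms by (auto simp: d_def)
  have "{x-d..x+d} \<subseteq> ball x e" using d by (auto simp: dist_real_def)
  then show ?thesis using d e by (intro exI[of _ "x-d"] exI[of _ "x+d"]) auto
qed

lemma sub_in_U: "goodU U \<Longrightarrow> (a::real) < b \<Longrightarrow> \<exists>a' b'. a < a' \<and> a' < b' \<and> b' < b \<and> {a'..b'} \<subseteq> U n"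
  unfolding goodU_def by (metis sub_in_open)

definition splitP :: "(nat \<Rightarrow> real set) \<Rightarrow> nat \<Rightarrow> real \<times> real \<Rightarrow> (real \<times> real) \<times> (real \<times> real) \<Rightarrow> bool" where
  "splitP U n I p \<longleftrightarrow> fst I < fst (fst p) \<and> fst (fst p) < snd (fst p) \<and> snd (fst p) < fst (snd p)
     \<and> fst (snd p) < snd (snd p) \<and> snd (snd p) < snd I
     \<and> {fst (fst p)..snd (fst p)} \<subseteq> U n \<and> {fst (snd p)..snd (snd p)} \<subseteq> U n"

lemma split_ex:
  assumes "goodU U" "fst I < snd I"
  shows "\<exists>p. splitP U n I p"
proof -
  define m where "m = (fst I + snd I) / 2"
  have "fst I < m" "m < snd I" using assms by (auto simp: m_def)
  obtain a0 b0 where 0: "fst I < a0" "a0 < b0" "b0 < m" "{a0..b0} \<subseteq> U n"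
    using sub_in_U[OF assms(1) \<open>fst I < m\<close>] by blast
  obtain a1 b1 where 1: "m < a1" "a1 < b1" "b1 < snd I" "{a1..b1} \<subseteq> U n"
    using sub_in_U[OF assms(1) \<open>m < snd I\<close>] by blast
  show ?thesis using 0 1 by (intro exI[of _ "((a0,b0),(a1,b1))"]) (auto simp: splitP_def)
qed

definition spl where "spl U n I = (SOME p. splitP U n I p)"

lemma spl: "goodU U \<Longrightarrow> fst I < snd I \<Longrightarrow> splitP U n I (spl U n I)"
  unfolding spl_def by (rule someI_ex, rule split_ex)

primrec node :: "(nat \<Rightarrow> real set) \<Rightarrow> real \<times> real \<Rightarrow> bool list \<Rightarrow> real \<times> real" where
  "node U R [] = R"
| "node U R (b # s) = (if b then snd else fst) (spl U (Suc (length s)) (node U R s))"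

definition rootok :: "(nat \<Rightarrow> real set) \<Rightarrow> real \<times> real \<Rightarrow> bool" where
  "rootok U R \<longleftrightarrow> fst R < snd R \<and> {fst R..snd R} \<subseteq> U 0"

lemma node_ok:
  assumes "goodU U" "rootok U R"
  shows "fst (node U R s) < snd (node U R s) \<and> {fst (node U R s)..snd (node U R s)} \<subseteq> U (length s)"
proof (induction s)
  case Nil then show ?case using assms(2) by (simp add: rootok_def)
next
  case (Cons b s)
  have "splitP U (Suc (length s)) (node U R s) (spl U (Suc (length s)) (node U R s))"
    using spl[OF assms(1)] Cons.IH by blast
  then show ?case by (cases b) (auto simp: splitP_def)
qed

lemma node_child:
  assumes "goodU U" "rootok U R"
  shows "fst (node U R s) < fst (node U R (b#s)) \<and> snd (node U R (b#s)) < snd (node U R s)"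
proof -
  have "splitP U (Suc (length s)) (node U R s) (spl U (Suc (length s)) (node U R s))"
    using spl[OF assms(1)] node_ok[OF assms] by blast
  then show ?thesis by (cases b) (auto simp: splitP_def)
qed

lemma node_suffix:
  assumes "goodU U" "rootok U R"
  shows "fst (node U R s) \<le> fst (node U R (t @ s)) \<and> snd (node U R (t @ s)) \<le> snd (node U R s)"
proof (induction t)
  case Nil then show ?case by simp
next
  case (Cons b t)
  then show ?case using node_child[OF assms, of "t @ s" b] by auto
qed

lemma node_disj:
  assumes "goodU U" "rootok U R"
  shows "length s = length s' \<Longrightarrow> s \<noteq> s' \<Longrightarrow>
    snd (node U R s) < fst (node U R s') \<or> snd (node U R s') < fst (node U R s)"
proof (induction s arbitrary: s')
  case Nil then show ?case by simp
next
  case (Cons b t)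
  then obtain b' t' where s': "s' = b' # t'" by (cases s') auto
  show ?case
  proof (cases "t = t'")
    case True
    then have "b \<noteq> b'" using Cons.prems s' by auto
    have "splitP U (Suc (length t)) (node U R t) (spl U (Suc (length t)) (node U R t))"
      using spl[OF assms(1)] node_ok[OF assms] by blast
    then show ?thesis using \<open>b \<noteq> b'\<close> True s' by (cases b; cases b') (auto simp: splitP_def)
  next
    case False
    then have "snd (node U R t) < fst (node U R t') \<or> snd (node U R t') < fst (node U R t)"
      using Cons s' by auto
    then show ?thesis using node_child[OF assms, of t b] node_child[OF assms, of t' b'] s' by auto
  qed
qed

definition lv :: "nat \<Rightarrow> bool list set" where "lv n = {s. length s = n}"

lemma finite_lv: "finite (lv n)"
  using finite_lists_length_eq[of "UNIV::bool set" n] by (simp add: lv_def)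

lemma sum_lv_Suc:
  fixes f :: "bool list \<Rightarrow> real"
  shows "sum f (lv (Suc n)) = (\<Sum>s\<in>lv n. f (False#s) + f (True#s))"
proof -
  have eq: "lv (Suc n) = Cons False ` lv n \<union> Cons True ` lv n"
    by (auto simp: lv_def length_Suc_conv)
  have "sum f (lv (Suc n)) = sum f (Cons False ` lv n) + sum f (Cons True ` lv n)"
    unfolding eq by (rule sum.union_disjoint) (auto simp: finite_lv)
  also have "\<dots> = (\<Sum>s\<in>lv n. f (False#s)) + (\<Sum>s\<in>lv n. f (True#s))"
    by (simp add: sum.reindex)
  finally show ?thesis by (simp add: sum.distrib)
qed

lemma sum_lv_one: "(\<Sum>s\<in>lv n. (1::real)) = 2^n"
proof (induction n)
  case 0
  have "lv 0 = {[]}" by (auto simp: lv_def)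
  then show ?case by simp
next
  case (Suc n)
  have "(\<Sum>s\<in>lv (Suc n). (1::real)) = (\<Sum>s\<in>lv n. 2)" unfolding sum_lv_Suc by simp
  also have "\<dots> = 2 * (\<Sum>s\<in>lv n. (1::real))" by (simp add: sum_distrib_left)
  finally show ?case using Suc by simp
qed

definition ramp :: "real \<times> real \<Rightarrow> real \<Rightarrow> real" where
  "ramp I x = max 0 (min 1 ((x - fst I) * (1 / (snd I - fst I))))"

lemma ramp_left: "x \<le> fst I \<Longrightarrow> fst I < snd I \<Longrightarrow> ramp I x = 0"
proof -
  assume a: "x \<le> fst I" "fst I < snd I"
  have "(x - fst I) * (1 / (snd I - fst I)) \<le> 0" using a by (intro mult_nonpos_nonneg) auto
  then show ?thesis unfolding ramp_def by simp
qed

lemma ramp_right: "snd I \<le> x \<Longrightarrow> fst I < snd I \<Longrightarrow> ramp I x = 1"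
  unfolding ramp_def by (auto simp: field_simps)

lemma ramp_bounds: "0 \<le> ramp I x" "ramp I x \<le> 1"
  unfolding ramp_def by auto

lemma continuous_ramp: "continuous_on UNIV (ramp I)"
  unfolding ramp_def by (intro continuous_intros)

definition gn :: "(nat \<Rightarrow> real set) \<Rightarrow> real \<times> real \<Rightarrow> nat \<Rightarrow> real \<Rightarrow> real" where
  "gn U R n x = (\<Sum>s\<in>lv n. ramp (node U R s) x) / 2^n"

lemma continuous_gn: "continuous_on UNIV (gn U R n)"
  unfolding gn_def
  by (intro continuous_intros continuous_on_compose2[OF continuous_ramp]) auto

lemma aux_abs: "0 \<le> a \<Longrightarrow> a \<le> 1 \<Longrightarrow> 0 \<le> b \<Longrightarrow> b \<le> 1 \<Longrightarrow> 0 \<le> c \<Longrightarrow> c \<le> 1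
  \<Longrightarrow> \<bar>(a+b)/2 - c\<bar> \<le> (1::real)"
  by (auto simp: abs_le_iff field_simps)

lemma gn_diff:
  assumes "goodU U" "rootok U R"
  shows "\<bar>gn U R (Suc n) x - gn U R n x\<bar> \<le> (1/2)^n"
proof -
  define D where "D s = (ramp (node U R (False#s)) x + ramp (node U R (True#s)) x)/2 - ramp (node U R s) x" for s
  have s1: "(\<Sum>s\<in>lv n. D s) = (\<Sum>s\<in>lv n. ramp (node U R (False#s)) x + ramp (node U R (True#s)) x)/2 - (\<Sum>s\<in>lv n. ramp (node U R s) x)"
    unfolding D_def by (simp only: sum_subtractf sum_divide_distrib)
  have eq: "gn U R (Suc n) x - gn U R n x = (\<Sum>s\<in>lv n. D s) / 2^n"
    unfolding gn_def sum_lv_Suc s1 by (simp add: field_simps del: node.simps)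
  have D0: "D s = 0" if "x \<le> fst (node U R s) \<or> snd (node U R s) \<le> x" for s
  proof -
    have o: "fst (node U R s) < snd (node U R s)" "fst (node U R (b#s)) < snd (node U R (b#s))" for b
      using node_ok[OF assms] by blast+
    have c: "fst (node U R s) < fst (node U R (b#s)) \<and> snd (node U R (b#s)) < snd (node U R s)" for b
      using node_child[OF assms] by blast
    show ?thesis
    proof (cases "x \<le> fst (node U R s)")
      case True
      have "ramp (node U R s) x = 0" using True o(1) by (intro ramp_left) auto
      moreover have "ramp (node U R (b#s)) x = 0" for b
        using True c[of b] o(2)[of b] by (intro ramp_left) auto
      ultimately show ?thesis unfolding D_def by (simp del: node.simps)
    next
      case False
      then have F: "snd (node U R s) \<le> x" using that by auto
      have "ramp (node U R s) x = 1" using F o(1) by (intro ramp_right) auto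
      moreover have "ramp (node U R (b#s)) x = 1" for b
        using F c[of b] o(2)[of b] by (intro ramp_right) auto
      ultimately show ?thesis unfolding D_def by (simp del: node.simps)
    qed
  qed
  have D1: "\<bar>D s\<bar> \<le> 1" for s
    unfolding D_def by (rule aux_abs; rule ramp_bounds)
  have S: "\<bar>\<Sum>s\<in>lv n. D s\<bar> \<le> 1"
  proof (cases "\<exists>s0\<in>lv n. fst (node U R s0) < x \<and> x < snd (node U R s0)")
    case True
    then obtain s0 where s0: "s0 \<in> lv n" "fst (node U R s0) < x" "x < snd (node U R s0)" by blast
    have "\<forall>s\<in>lv n - {s0}. D s = 0"
    proof
      fix s assume s: "s \<in> lv n - {s0}"
      then have "snd (node U R s) < fst (node U R s0) \<or> snd (node U R s0) < fst (node U R s)"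
        using node_disj[OF assms, of s s0] s0(1) by (auto simp: lv_def)
      then show "D s = 0" using s0 by (intro D0) auto
    qed
    then have "(\<Sum>s\<in>lv n. D s) = D s0"
      using sum.remove[OF finite_lv s0(1), of D] by simp
    then show ?thesis using D1 by simp
  next
    case False
    then have "\<forall>s\<in>lv n. D s = 0" by (intro ballI D0) (auto simp: not_less)
    then show ?thesis by simp
  qed
  have "\<bar>gn U R (Suc n) x - gn U R n x\<bar> = \<bar>\<Sum>s\<in>lv n. D s\<bar> / 2^n" unfolding eq by simp
  also have "\<dots> \<le> 1 / 2^n" using S by (simp add: divide_right_mono)
  finally show ?thesis by (simp add: power_one_over)
qed

definition GG :: "(nat \<Rightarrow> real set) \<Rightarrow> real \<times> real \<Rightarrow> real \<Rightarrow> real" where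
  "GG U R x = gn U R 0 x + (\<Sum>i. gn U R (Suc i) x - gn U R i x)"

lemma GG_unif:
  assumes "goodU U" "rootok U R"
  shows "uniform_limit UNIV (\<lambda>n x. \<Sum>i<n. gn U R (Suc i) x - gn U R i x)
           (\<lambda>x. \<Sum>i. gn U R (Suc i) x - gn U R i x) sequentially"
  by (rule Weierstrass_m_test[where M="\<lambda>i. (1/2)^i"]) (auto simp: gn_diff[OF assms] summable_geometric)

lemma GG_cont:
  assumes "goodU U" "rootok U R"
  shows "continuous_on UNIV (GG U R)"
proof -
  have "continuous_on UNIV (\<lambda>x. \<Sum>i. gn U R (Suc i) x - gn U R i x)"
    by (rule uniform_limit_theorem[OF _ GG_unif[OF assms]])
       (auto intro!: always_eventually continuous_intros continuous_gn)
  then show ?thesis unfolding GG_def by (intro continuous_intros continuous_gn)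
qed

lemma GG_lim:
  assumes "goodU U" "rootok U R"
  shows "(\<lambda>n. gn U R n x) \<longlonglongrightarrow> GG U R x"
proof -
  have "(\<lambda>n. \<Sum>i<n. gn U R (Suc i) x - gn U R i x) \<longlonglongrightarrow> (\<Sum>i. gn U R (Suc i) x - gn U R i x)"
    using tendsto_uniform_limitI[OF GG_unif[OF assms], of x] by simp
  then have "(\<lambda>n. gn U R 0 x + (\<Sum>i<n. gn U R (Suc i) x - gn U R i x)) \<longlonglongrightarrow> GG U R x"
    unfolding GG_def by (intro tendsto_add tendsto_const)
  moreover have "(\<Sum>i<n. gn U R (Suc i) x - gn U R i x) = gn U R n x - gn U R 0 x" for n
    by (induction n) auto
  ultimately show ?thesis by simp
qed

definition Cn :: "(nat \<Rightarrow> real set) \<Rightarrow> real \<times> real \<Rightarrow> nat \<Rightarrow> real set" where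
  "Cn U R n = (\<Union>s\<in>lv n. {fst (node U R s)..snd (node U R s)})"

definition CC :: "(nat \<Rightarrow> real set) \<Rightarrow> real \<times> real \<Rightarrow> real set" where
  "CC U R = (\<Inter>n. Cn U R n)"

lemma closed_CC: "closed (CC U R)"
  unfolding CC_def Cn_def by (intro closed_INT ballI closed_UN finite_lv) auto

lemma CC_sub: 
  assumes "goodU U" "rootok U R"
  shows "CC U R \<subseteq> U n"
proof
  fix x assume "x \<in> CC U R"
  then have "x \<in> Cn U R n" unfolding CC_def by blast
  then obtain s where "s \<in> lv n" "x \<in> {fst (node U R s)..snd (node U R s)}" unfolding Cn_def by blast
  then show "x \<in> U n" using node_ok[OF assms, of s] by (auto simp: lv_def)
qed

lemma node_in_Cn:
  assumes "goodU U" "rootok U R" "N \<le> length s"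
  shows "{fst (node U R s)..snd (node U R s)} \<subseteq> Cn U R N"
proof -
  have "fst (node U R (drop (length s - N) s)) \<le> fst (node U R s) \<and>
      snd (node U R s) \<le> snd (node U R (drop (length s - N) s))"
    using node_suffix[OF assms(1,2), of "drop (length s - N) s" "take (length s - N) s"]
    by (simp only: append_take_drop_id)
  then have "{fst (node U R s)..snd (node U R s)} \<subseteq> {fst (node U R (drop (length s - N) s))..snd (node U R (drop (length s - N) s))}"
    by auto
  moreover have "drop (length s - N) s \<in> lv N" using assms(3) by (simp add: lv_def)
  then have "{fst (node U R (drop (length s - N) s))..snd (node U R (drop (length s - N) s))} \<subseteq> Cn U R N"
    unfolding Cn_def by blast
  ultimately show ?thesis by (rule subset_trans)
qed

lemma GG_locconst:
  assumes "goodU U" "rootok U R" "x \<notin> CC U R"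
  shows "\<exists>r>0. \<forall>z\<in>ball x r. GG U R z = GG U R x"
proof -
  obtain N where N: "x \<notin> Cn U R N" using assms(3) unfolding CC_def by blast
  have "closed (Cn U R N)" unfolding Cn_def by (intro closed_UN finite_lv) auto
  then have "open (- Cn U R N)" by (simp add: open_Compl)
  then obtain r where r: "r > 0" "ball x r \<subseteq> - Cn U R N"
    using N open_contains_ball by blast
  have "GG U R z = GG U R x" if z: "z \<in> ball x r" for z
  proof -
    have eq: "gn U R n x = gn U R n z" if "n \<ge> N" for n
    proof -
      have "ramp (node U R s) x = ramp (node U R s) z" if s: "s \<in> lv n" for s
      proof -
        define l where "l = fst (node U R s)"
        define u where "u = snd (node U R s)"
        have lu: "l < u" using node_ok[OF assms(1,2)] unfolding l_def u_def by blast
        have sub: "{l..u} \<subseteq> Cn U R N" using node_in_Cn[OF assms(1,2), of N s] s \<open>n \<ge> N\<close>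
          unfolding l_def u_def by (simp add: lv_def)
        have nb: "y \<notin> ball x r" if "y \<in> {l..u}" for y using that sub r(2) by blast
        have xz: "x \<notin> {l..u}" "z \<notin> {l..u}" using nb[of x] nb[of z] z r(1) by auto
        have d: "\<bar>z - x\<bar> < r" using z by (simp add: dist_real_def abs_minus_commute)
        have "\<not> (x < l \<and> u < z)"
        proof
          assume a: "x < l \<and> u < z"
          then have "dist x l < r" using d lu by (simp add: dist_real_def)
          then show False using nb[of l] lu by simp
        qed
        moreover have "\<not> (z < l \<and> u < x)"
        proof
          assume a: "z < l \<and> u < x"
          then have "dist x l < r" using d lu by (simp add: dist_real_def)
          then show False using nb[of l] lu by simp
        qed
        ultimately have disj: "(x \<le> l \<and> z \<le> l) \<or> (u \<le> x \<and> u \<le> z)" using xz by auto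
        have r0: "ramp (node U R s) w = 0" if "w \<le> l" for w
          using ramp_left[of w "node U R s"] that lu unfolding l_def u_def by simp
        have r1: "ramp (node U R s) w = 1" if "u \<le> w" for w
          using ramp_right[of "node U R s" w] that lu unfolding l_def u_def by simp
        show ?thesis
        proof (cases "x \<le> l \<and> z \<le> l")
          case True then show ?thesis using r0 by simp
        next
          case False then have "u \<le> x \<and> u \<le> z" using disj by blast
          then show ?thesis using r1 by simp
        qed
      qed
      then show ?thesis unfolding gn_def by simp
    qed
    have ev: "eventually (\<lambda>n. gn U R n x = gn U R n z) sequentially"
      using eq by (intro eventually_sequentiallyI[of N]) simp
    have "(\<lambda>n. gn U R n z) \<longlonglongrightarrow> GG U R x"
      using GG_lim[OF assms(1,2), of x] ev by (rule Lim_transform_eventually)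
    from LIMSEQ_unique[OF GG_lim[OF assms(1,2), of z] this] show ?thesis .
  qed
  then show ?thesis using r by blast
qed

lemma GG_nonconst:
  assumes "goodU U" "rootok U R"
  shows "GG U R (fst R - 1) = 0" "GG U R (snd R + 1) = 1"
proof -
  have lu: "fst (node U R s) < snd (node U R s)" for s using node_ok[OF assms] by blast
  have bnd: "fst R \<le> fst (node U R s) \<and> snd (node U R s) \<le> snd R" for s
    using node_suffix[OF assms, of "[]" s] by simp
  have r0: "ramp (node U R s) (fst R - 1) = 0" for s
    using bnd[of s] lu[of s] by (intro ramp_left) auto
  have "gn U R n (fst R - 1) = 0" for n
    unfolding gn_def r0 by simp
  then show "GG U R (fst R - 1) = 0" using GG_lim[OF assms, of "fst R - 1"] by (simp add: LIMSEQ_const_iff)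
  have "gn U R n (snd R + 1) = 1" for n
  proof -
    have r1: "ramp (node U R s) (snd R + 1) = 1" for s
      using bnd[of s] lu[of s] by (intro ramp_right) auto
    have "(\<Sum>s\<in>lv n. ramp (node U R s) (snd R + 1)) = (\<Sum>s\<in>lv n. 1)"
      unfolding r1 by simp
    then show ?thesis unfolding gn_def sum_lv_one by simp
  qed
  then show "GG U R (snd R + 1) = 1" using GG_lim[OF assms, of "snd R + 1"] by (simp add: LIMSEQ_const_iff)
qed

lemma cantor_exists:
  assumes "goodU U"
  shows "\<exists>C (g::real\<Rightarrow>real). closed C \<and> (\<forall>n. C \<subseteq> U n) \<and> continuous_on UNIV g \<and> (\<exists>a b. g a \<noteq> g b)
     \<and> (\<forall>x. x \<notin> C \<longrightarrow> (\<exists>r>0. \<forall>z\<in>ball x r. g z = g x))"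
proof -
  obtain a b where ab: "(0::real) < a" "a < b" "b < 1" "{a..b} \<subseteq> U 0"
    using sub_in_U[OF assms, of 0 1 0] by auto
  have R: "rootok U (a,b)" using ab by (simp add: rootok_def)
  have nc: "\<exists>a' b'. GG U (a,b) a' \<noteq> GG U (a,b) b'"
    using GG_nonconst[OF assms R] by (intro exI[of _ "a - 1"] exI[of _ "b + 1"]) simp
  have "closed (CC U (a,b)) \<and> (\<forall>n. CC U (a,b) \<subseteq> U n) \<and> continuous_on UNIV (GG U (a,b))
     \<and> (\<exists>a' b'. GG U (a,b) a' \<noteq> GG U (a,b) b')
     \<and> (\<forall>x. x \<notin> CC U (a,b) \<longrightarrow> (\<exists>r>0. \<forall>z\<in>ball x r. GG U (a,b) z = GG U (a,b) x))"
    apply (intro conjI allI impI)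
        apply (rule closed_CC)
       apply (rule CC_sub[OF assms R])
      apply (rule GG_cont[OF assms R])
     apply (rule nc)
    apply (erule GG_locconst[OF assms R])
    done
  then show ?thesis
    apply -
    apply (rule exI[where x="CC U (a,b)"])
    apply (rule exI[where x="GG U (a,b)"])
    apply assumption
    done
qed

definition wildU :: "(real \<Rightarrow> real) \<Rightarrow> real set \<Rightarrow> real \<Rightarrow> bool" where
  "wildU h J e \<longleftrightarrow> (\<forall>a b. a < b \<longrightarrow> {a..b} \<subseteq> J \<longrightarrow> (\<forall>x\<in>J. \<exists>x1. a < x1 \<and> x1 < b \<and> h x - e < h x1))"

definition wild :: "(real \<Rightarrow> real) \<Rightarrow> real set \<Rightarrow> real \<Rightarrow> bool" where
  "wild h J e \<longleftrightarrow> wildU h J e \<and> wildU (\<lambda>x. - h x) J e"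

lemma wildU_mono:
  assumes "wildU h J e" "J' \<subseteq> J" "e \<le> e'"
  shows "wildU h J' e'"
  unfolding wildU_def
proof (intro allI impI ballI)
  fix a b x assume ab: "a < b" "{a..b} \<subseteq> J'" and x: "x \<in> J'"
  then obtain x1 where "a < x1 \<and> x1 < b \<and> h x - e < h x1"
    using assms(1,2) unfolding wildU_def by blast
  then show "\<exists>x1. a < x1 \<and> x1 < b \<and> h x - e' < h x1" using assms(3) by force
qed

lemma wild_mono: "wild h J e \<Longrightarrow> J' \<subseteq> J \<Longrightarrow> e \<le> e' \<Longrightarrow> wild h J' e'"
  unfolding wild_def using wildU_mono by blast

lemma wild_neg: "wild h J e \<Longrightarrow> wild (\<lambda>x. - h x) J e"
  unfolding wild_def by simp

lemma wildU_exists: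
  fixes h :: "real \<Rightarrow> real"
  assumes B: "\<And>x. \<bar>h x\<bar> < B" and e: "e > 0" and ab: "a < b"
  shows "\<exists>a' b'. a \<le> a' \<and> a' < b' \<and> b' \<le> b \<and> wildU h {a'..b'} e"
proof -
  have main: "\<And>a b. a < b \<Longrightarrow> (\<forall>x\<in>{a..b}. h x < -B + real k * e) \<Longrightarrow>
      \<exists>a' b'. a \<le> a' \<and> a' < b' \<and> b' \<le> b \<and> wildU h {a'..b'} e" for k
  proof (induction k)
    case (0 a b)
    then have "h a < -B" by simp
    with B[of a] show ?case by simp
  next
    case (Suc k a b)
    show ?case
    proof (cases "wildU h {a..b} e")
      case True then show ?thesis using Suc.prems(1) by (intro exI[of _ a] exI[of _ b]) simp
    next
      case False
      then obtain a1 b1 where 0: "a1 < b1" "{a1..b1} \<subseteq> {a..b}"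
        "\<not>(\<forall>x\<in>{a..b}. \<exists>x1. a1 < x1 \<and> x1 < b1 \<and> h x - e < h x1)"
        unfolding wildU_def by blast
      then obtain x where x: "x \<in> {a..b}" "\<not>(\<exists>x1. a1 < x1 \<and> x1 < b1 \<and> h x - e < h x1)" by blast
      have 1: "a1 < b1" "{a1..b1} \<subseteq> {a..b}" "x \<in> {a..b}" using 0 x by auto
      have 2: "\<forall>x1. a1 < x1 \<and> x1 < b1 \<longrightarrow> h x1 \<le> h x - e" using x(2) by (meson not_less)
      define a2 where "a2 = (2*a1+b1)/3"
      define b2 where "b2 = (a1+2*b1)/3"
      have ab2: "a2 < b2" "a1 < a2" "b2 < b1" using 1 by (auto simp: a2_def b2_def)
      have hx: "h x < -B + real (Suc k) * e" using Suc.prems(2) 1(3) by blast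
      have "\<forall>y\<in>{a2..b2}. h y < -B + real k * e"
      proof
        fix y assume "y \<in> {a2..b2}"
        then have "a1 < y \<and> y < b1" using ab2 by auto
        then have "h y \<le> h x - e" using 2 by blast
        then show "h y < -B + real k * e" using hx by (simp add: algebra_simps)
      qed
      from Suc.IH[OF ab2(1) this] obtain a' b' where
        ab': "a2 \<le> a'" "a' < b'" "b' \<le> b2" "wildU h {a'..b'} e" by blast
      have "a \<le> a1" "b1 \<le> b" using 1(1,2) by auto
      then show ?thesis using ab' ab2 by (intro exI[of _ a'] exI[of _ b']) auto
    qed
  qed
  obtain k where k: "2 * B < real k * e" using ex_less_of_nat_mult[OF e] by blast
  have "\<forall>x\<in>{a..b}. h x < -B + real k * e" using B k by (smt (verit) abs_less_iff)
  then show ?thesis using main[OF ab] by blast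
qed

lemma wild_exists:
  fixes h :: "real \<Rightarrow> real"
  assumes B: "\<And>x. \<bar>h x\<bar> < B" and e: "e > 0" and ab: "a < b"
  shows "\<exists>a' b'. a \<le> a' \<and> a' < b' \<and> b' \<le> b \<and> wild h {a'..b'} e"
proof -
  obtain a1 b1 where 1: "a \<le> a1" "a1 < b1" "b1 \<le> b" "wildU h {a1..b1} e"
    using wildU_exists[of h, OF B e ab] by blast
  have B': "\<bar>- h x\<bar> < B" for x using B[of x] by simp
  obtain a2 b2 where 2: "a1 \<le> a2" "a2 < b2" "b2 \<le> b1" "wildU (\<lambda>x. - h x) {a2..b2} e"
    using wildU_exists[of "\<lambda>x. - h x", OF B' e 1(2)] by blast
  have "wildU h {a2..b2} e" using wildU_mono[OF 1(4)] 2 by auto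
  then show ?thesis using 1 2 unfolding wild_def by (intro exI[of _ a2] exI[of _ b2]) auto
qed

definition Wset :: "(real \<Rightarrow> real) \<Rightarrow> real \<Rightarrow> real set" where
  "Wset h e = {c. \<exists>\<rho>>0. wild h (cball c \<rho>) e}"

lemma open_Wset: "open (Wset h e)"
  unfolding open_contains_ball
proof
  fix c assume "c \<in> Wset h e"
  then obtain \<rho> where r: "\<rho> > 0" "wild h (cball c \<rho>) e" unfolding Wset_def by blast
  have "ball c (\<rho>/2) \<subseteq> Wset h e"
  proof
    fix c' assume c': "c' \<in> ball c (\<rho>/2)"
    have "cball c' (\<rho>/2) \<subseteq> cball c \<rho>"
    proof
      fix z assume "z \<in> cball c' (\<rho>/2)"
      then show "z \<in> cball c \<rho>" using c' dist_triangle[of c z c'] by (auto simp: dist_commute)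
    qed
    then have "wild h (cball c' (\<rho>/2)) e" using wild_mono[OF r(2)] by blast
    then show "c' \<in> Wset h e" unfolding Wset_def using r(1) by (auto intro!: exI[of _ "\<rho>/2"])
  qed
  then show "\<exists>\<epsilon>>0. ball c \<epsilon> \<subseteq> Wset h e" using r(1) by (intro exI[of _ "\<rho>/2"]) auto
qed

lemma dense_Wset:
  fixes h :: "real \<Rightarrow> real"
  assumes B: "\<And>x. \<bar>h x\<bar> < B" and e: "e > 0" and ab: "a < b"
  shows "\<exists>x. a < x \<and> x < b \<and> x \<in> Wset h e"
proof -
  have "(2*a+b)/3 < (a+2*b)/3" using ab by simp
  from wild_exists[of h, OF B e this] obtain a' b' where
    1: "(2*a+b)/3 \<le> a'" "a' < b'" "b' \<le> (a+2*b)/3" "wild h {a'..b'} e" by blast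
  have "cball ((a'+b')/2) ((b'-a')/2) = {a'..b'}" by (simp add: cball_eq_atLeastAtMost field_simps)
  then have "(a'+b')/2 \<in> Wset h e" unfolding Wset_def using 1 by (auto intro!: exI[of _ "(b'-a')/2"])
  moreover have "a < (a'+b')/2" "(a'+b')/2 < b" using 1 ab by auto
  ultimately show ?thesis by blast
qed

lemma conn_ivt:
  fixes f :: "real \<Rightarrow> real"
  assumes "connected (f ` S)" "u \<in> S" "w \<in> S" "f u \<le> v" "v \<le> f w"
  shows "\<exists>x\<in>S. f x = v"
proof -
  have "{f u..f w} \<subseteq> f ` S" using connected_contains_Icc[OF assms(1)] assms(2,3) by blast
  then have "v \<in> f ` S" using assms(4,5) by auto
  then show ?thesis by auto
qed

lemma darboux_conn: "darboux F \<Longrightarrow> connected S \<Longrightarrow> connected (F ` S)"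
  unfolding darboux_def by blast

lemma darboux_arctan:
  assumes "darboux F" "connected S"
  shows "connected ((\<lambda>x. arctan (F x)) ` S)"
proof -
  have "(\<lambda>x. arctan (F x)) ` S = arctan ` (F ` S)" by auto
  moreover have "connected (arctan ` (F ` S))"
    by (rule connected_continuous_image[OF _ darboux_conn[OF assms]])
       (intro continuous_intros)
  ultimately show ?thesis by simp
qed

lemma darboux_neg:
  assumes "darboux F"
  shows "darboux (\<lambda>x. - F x)"
  unfolding darboux_def
proof (intro allI impI)
  fix S :: "real set" assume "connected S"
  have "(\<lambda>x. - F x) ` S = uminus ` (F ` S)" by auto
  moreover have "connected (uminus ` (F ` S))"
    by (rule connected_continuous_image[OF _ darboux_conn[OF assms \<open>connected S\<close>]])
       (intro continuous_intros)
  ultimately show "connected ((\<lambda>x. - F x) ` S)" by simp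
qed

lemma near_interval:
  fixes p w d lo hi :: real
  assumes "p \<in> {lo..hi}" "w \<in> {lo..hi}" "p \<noteq> w" "d > 0"
  shows "\<exists>\<alpha> \<beta>. \<alpha> < \<beta> \<and> w \<in> {\<alpha>..\<beta>} \<and> {\<alpha>..\<beta>} \<subseteq> {lo..hi} \<and> {\<alpha>..\<beta>} \<subseteq> cball w d
     \<and> {\<alpha>..\<beta>} \<subseteq> cball p (dist w p)"
proof (cases "p < w")
  case True
  show ?thesis
    apply (rule exI[of _ "w - min d (w - p)"], rule exI[of _ w])
    using assms True by (auto simp: dist_real_def)
next
  case False
  then have "w < p" using assms(3) by auto
  show ?thesis
    apply (rule exI[of _ w], rule exI[of _ "w + min d (p - w)"])
    using assms \<open>w < p\<close> by (auto simp: dist_real_def)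
qed


lemma key_open:
  fixes F g :: "real \<Rightarrow> real" and C :: "real set"
  assumes dF: "darboux F" and gc: "continuous_on UNIV g"
    and loc: "\<And>x. x \<notin> C \<Longrightarrow> \<exists>r>0. \<forall>z\<in>ball x r. g z = g x"
    and nd: "\<And>a b. a < b \<Longrightarrow> \<exists>x. a < x \<and> x < b \<and> x \<notin> C"
    and wC: "\<And>c e. c \<in> C \<Longrightarrow> e > 0 \<Longrightarrow> \<exists>\<rho>>0. wild (\<lambda>x. arctan (F x)) (cball c \<rho>) e"
    and nK: "\<forall>x\<in>{lo..hi}. F x + g x \<noteq> y"
    and pK: "p \<in> {lo..hi}" and pA: "F p + g p < y"
  shows "\<exists>r>0. \<forall>w\<in>{lo..hi}. dist w p < r \<longrightarrow> F w + g w < y"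
proof (rule ccontr)
  define h where "h x = arctan (F x)" for x
  define \<tau> where "\<tau> x = arctan (y - g x)" for x
  assume "\<not> ?thesis"
  then have bad: "\<exists>w\<in>{lo..hi}. dist w p < r \<and> y < F w + g w" if "r > 0" for r
    using nK that by (metis linorder_neqE_linordered_idom)
  have finish: False if fa: "\<alpha> < \<beta>" "{\<alpha>..\<beta>} \<subseteq> {lo..hi}" "\<forall>z\<in>{\<alpha>..\<beta>}. g z = k"
    "x1 \<in> {\<alpha>..\<beta>}" "arctan (y - k) < h x1" "x2 \<in> {\<alpha>..\<beta>}" "h x2 < arctan (y - k)" for \<alpha> \<beta> k x1 x2
  proof -
    define S where "S = {min x1 x2..max x1 x2}"
    have S: "S \<subseteq> {\<alpha>..\<beta>}" using fa unfolding S_def by auto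
    have "connected (h ` S)" unfolding h_def S_def by (rule darboux_arctan[OF dF]) simp
    then obtain x where x: "x \<in> S" "h x = arctan (y - k)"
      using conn_ivt[of h S x2 x1 "arctan (y - k)"] fa(5,7) unfolding S_def by force
    then have "F x = y - k" unfolding h_def by (simp add: arctan_eq_iff)
    moreover have "g x = k" using x(1) S fa(3) by blast
    moreover have "x \<in> {lo..hi}" using x(1) S fa(2) by blast
    ultimately show False using nK by force
  qed
  have \<tau>c: "continuous_on UNIV \<tau>" unfolding \<tau>_def by (intro continuous_intros gc)
  have \<tau>near: "\<exists>r>0. \<forall>x'. dist x' x0 < r \<longrightarrow> \<bar>\<tau> x' - \<tau> x0\<bar> < e" if "e > 0" for x0 e
    using \<tau>c that unfolding continuous_on_iff by (metis UNIV_I dist_real_def)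
  have hp: "h p < \<tau> p" using pA unfolding h_def \<tau>_def by (simp add: arctan_less_iff)
  show False
  proof (cases "p \<in> C")
    case False
    obtain r where r: "r > 0" "\<forall>z\<in>ball p r. g z = g p" using loc[OF False] by blast
    obtain w where w: "w \<in> {lo..hi}" "dist w p < r" "y < F w + g w" using bad[OF r(1)] by blast
    define S where "S = {min p w..max p w}"
    have SK: "S \<subseteq> {lo..hi}" using w(1) pK unfolding S_def by auto
    have Sb: "S \<subseteq> ball p r" using w(2) unfolding S_def by (auto simp: dist_real_def)
    have gw: "g w = g p" using r(2) w(2) by (simp add: dist_commute)
    have "connected (F ` S)" unfolding S_def by (rule darboux_conn[OF dF]) simp
    then obtain x where x: "x \<in> S" "F x = y - g p"
      using conn_ivt[of F S p w "y - g p"] pA w(3) gw unfolding S_def by force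
    have "g x = g p" using x(1) Sb r(2) by blast
    then show False using nK x SK by force
  next
    case True
    define \<delta> where "\<delta> = \<tau> p - h p"
    have \<delta>: "\<delta> > 0" using hp unfolding \<delta>_def by simp
    obtain r1 where r1: "r1 > 0" "\<forall>x'. dist x' p < r1 \<longrightarrow> \<bar>\<tau> x' - \<tau> p\<bar> < \<delta>/3"
      using \<tau>near[of "\<delta>/3" p] \<delta> by auto
    obtain \<rho>0 where \<rho>0: "\<rho>0 > 0" "wild h (cball p \<rho>0) (\<delta>/3)"
      using wC[OF True, of "\<delta>/3"] \<delta> unfolding h_def by auto
    define \<rho> where "\<rho> = min \<rho>0 r1"
    have \<rho>: "\<rho> > 0" "\<rho> \<le> r1" using \<rho>0 r1 by (auto simp: \<rho>_def)
    have wp: "wild h (cball p \<rho>) (\<delta>/3)" by (rule wild_mono[OF \<rho>0(2)]) (auto simp: \<rho>_def)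
    have lowp: "\<exists>x2. a < x2 \<and> x2 < b \<and> h x2 < \<tau> p - 2*\<delta>/3"
      if lab: "a < b" "{a..b} \<subseteq> cball p \<rho>" for a b
    proof -
      have "p \<in> cball p \<rho>" using \<rho> by simp
      then obtain x2 where "a < x2 \<and> x2 < b \<and> - h p - \<delta>/3 < - h x2"
        using wp lab unfolding wild_def wildU_def by blast
      then show ?thesis unfolding \<delta>_def by (intro exI[of _ x2]) (auto simp: field_simps)
    qed
    obtain w where w: "w \<in> {lo..hi}" "dist w p < \<rho>" "y < F w + g w" using bad[OF \<rho>(1)] by blast
    have hw: "\<tau> w < h w" using w(3) unfolding h_def \<tau>_def by (simp add: arctan_less_iff)
    have wp_ne: "w \<noteq> p" using w(3) pA by auto
    have \<tau>w: "\<bar>\<tau> w - \<tau> p\<bar> < \<delta>/3" using r1(2) w(2) \<rho> by auto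
    show False
    proof (cases "w \<in> C")
      case False
      obtain r2 where r2: "r2 > 0" "\<forall>z\<in>ball w r2. g z = g w" using loc[OF False] by blast
      obtain \<alpha> \<beta> where ab: "\<alpha> < \<beta>" "w \<in> {\<alpha>..\<beta>}" "{\<alpha>..\<beta>} \<subseteq> {lo..hi}" "{\<alpha>..\<beta>} \<subseteq> cball w (r2/2)"
        "{\<alpha>..\<beta>} \<subseteq> cball p (dist w p)"
        using near_interval[OF pK w(1) wp_ne[symmetric], of "r2/2"] r2(1) by auto
      have gc': "\<forall>z\<in>{\<alpha>..\<beta>}. g z = g w"
      proof
        fix z assume "z \<in> {\<alpha>..\<beta>}"
        then have "dist w z \<le> r2/2" using ab(4) by auto
        then have "z \<in> ball w r2" using r2(1) by (simp add: mem_ball)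
        then show "g z = g w" using r2(2) by blast
      qed
      have "{\<alpha>..\<beta>} \<subseteq> cball p \<rho>" using ab(5) w(2) by (auto simp: subset_iff)
      then obtain x2 where x2: "\<alpha> < x2" "x2 < \<beta>" "h x2 < \<tau> p - 2*\<delta>/3" using lowp[OF ab(1)] by blast
      have a2: "\<tau> p - \<delta>/3 < \<tau> w" using conjunct2[OF \<tau>w[unfolded abs_less_iff]] by linarith
      have "h x2 < \<tau> w" using x2(3) a2 \<delta> by linarith
      then have hx2: "h x2 < arctan (y - g w)" unfolding \<tau>_def .
      have hw': "arctan (y - g w) < h w" using hw unfolding \<tau>_def .
      have x2m: "x2 \<in> {\<alpha>..\<beta>}" using x2 by auto
      show False by (rule finish[OF ab(1) ab(3) gc' ab(2) hw' x2m hx2])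
    next
      case True
      define \<delta>' where "\<delta>' = h w - \<tau> w"
      have \<delta>': "\<delta>' > 0" using hw unfolding \<delta>'_def by simp
      obtain r3 where r3: "r3 > 0" "\<forall>x'. dist x' w < r3 \<longrightarrow> \<bar>\<tau> x' - \<tau> w\<bar> < \<delta>'/3"
        using \<tau>near[of "\<delta>'/3" w] \<delta>' by auto
      obtain \<rho>1 where \<rho>1: "\<rho>1 > 0" "wild h (cball w \<rho>1) (\<delta>'/3)"
        using wC[OF True, of "\<delta>'/3"] \<delta>' unfolding h_def by auto
      define d where "d = min (min \<rho>1 r3) (\<rho> - dist w p) / 2"
      have d: "d > 0" "d < \<rho>1" "d < r3" "d < \<rho> - dist w p" using \<rho>1 r3 w(2) by (auto simp: d_def)
      obtain \<alpha> \<beta> where ab: "\<alpha> < \<beta>" "{\<alpha>..\<beta>} \<subseteq> {lo..hi}" "{\<alpha>..\<beta>} \<subseteq> cball w d"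
        using near_interval[OF pK w(1) wp_ne[symmetric], of d] d(1) by auto
      obtain x0 where x0: "\<alpha> < x0" "x0 < \<beta>" "x0 \<notin> C" using nd[OF ab(1)] by blast
      obtain r4 where r4: "r4 > 0" "\<forall>z\<in>ball x0 r4. g z = g x0" using loc[OF x0(3)] by blast
      define d4 where "d4 = min r4 (min (x0 - \<alpha>) (\<beta> - x0)) / 2"
      have d4: "d4 > 0" "d4 < r4" "d4 < x0 - \<alpha>" "d4 < \<beta> - x0" using r4 x0 by (auto simp: d4_def)
      have I1: "{x0-d4..x0+d4} \<subseteq> {\<alpha>..\<beta>}" using d4 by auto
      have gI: "\<forall>z\<in>{x0-d4..x0+d4}. g z = g x0"
      proof
        fix z assume "z \<in> {x0-d4..x0+d4}"
        then have "dist x0 z < r4" using d4 by (auto simp: dist_real_def)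
        then have "z \<in> ball x0 r4" by (simp add: mem_ball)
        then show "g z = g x0" using r4(2) by blast
      qed
      have Iw: "{x0-d4..x0+d4} \<subseteq> cball w \<rho>1" using I1 ab(3) d(2) by (auto simp: subset_iff)
      have Ip: "{x0-d4..x0+d4} \<subseteq> cball p \<rho>"
      proof
        fix z assume "z \<in> {x0-d4..x0+d4}"
        then have "z \<in> {\<alpha>..\<beta>}" using I1 by blast
        then have "dist w z \<le> d" using ab(3) by auto
        then show "z \<in> cball p \<rho>" using dist_triangle[of p z w] d(4) by (auto simp: dist_commute)
      qed
      have "x0 \<in> {\<alpha>..\<beta>}" using x0 by auto
      then have x0w: "dist x0 w \<le> d" using ab(3) by (auto simp: dist_commute)
      have \<tau>x0w: "\<bar>\<tau> x0 - \<tau> w\<bar> < \<delta>'/3" using r3(2) x0w d(3) by auto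
      have "dist x0 p < \<rho>" using dist_triangle[of x0 p w] x0w d(4) by (auto simp: dist_commute)
      then have \<tau>x0p: "\<bar>\<tau> x0 - \<tau> p\<bar> < \<delta>/3" using r1(2) \<rho>(2) by auto
      have lt: "x0 - d4 < x0 + d4" using d4 by simp
      have "w \<in> cball w \<rho>1" using \<rho>1 by simp
      then obtain x1 where x1: "x0 - d4 < x1" "x1 < x0 + d4" "h w - \<delta>'/3 < h x1"
        using \<rho>1(2) lt Iw unfolding wild_def wildU_def by blast
      obtain x2 where x2: "x0 - d4 < x2" "x2 < x0 + d4" "h x2 < \<tau> p - 2*\<delta>/3"
        using lowp[OF lt Ip] by blast
      have a1: "\<tau> x0 < \<tau> w + \<delta>'/3" using conjunct1[OF \<tau>x0w[unfolded abs_less_iff]] by linarith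
      have a2: "\<tau> p - \<delta>/3 < \<tau> x0" using conjunct2[OF \<tau>x0p[unfolded abs_less_iff]] by linarith
      have "\<tau> x0 < h x1" using x1(3) a1 \<delta>'_def \<delta>' by linarith
      then have hx1: "arctan (y - g x0) < h x1" unfolding \<tau>_def .
      have "h x2 < \<tau> x0" using x2(3) a2 \<delta> by linarith
      then have hx2: "h x2 < arctan (y - g x0)" unfolding \<tau>_def .
      have IK: "{x0-d4..x0+d4} \<subseteq> {lo..hi}" using I1 ab(2) by auto
      have x1m: "x1 \<in> {x0-d4..x0+d4}" using x1 by auto
      have x2m: "x2 \<in> {x0-d4..x0+d4}" using x2 by auto
      show False by (rule finish[OF lt IK gI x1m hx1 x2m hx2])
    qed
  qed
qed

lemma darboux_sum:
  fixes F g :: "real \<Rightarrow> real" and C :: "real set"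
  assumes dF: "darboux F" and gc: "continuous_on UNIV g"
    and loc: "\<And>x. x \<notin> C \<Longrightarrow> \<exists>r>0. \<forall>z\<in>ball x r. g z = g x"
    and nd: "\<And>a b. a < b \<Longrightarrow> \<exists>x. a < x \<and> x < b \<and> x \<notin> C"
    and wC: "\<And>c e. c \<in> C \<Longrightarrow> e > 0 \<Longrightarrow> \<exists>\<rho>>0. wild (\<lambda>x. arctan (F x)) (cball c \<rho>) e"
  shows "darboux (\<lambda>x. F x + g x)"
  unfolding darboux_def
proof (intro allI impI)
  fix S :: "real set" assume S: "connected S"
  have dF': "darboux (\<lambda>x. - F x)" using darboux_neg[OF dF] .
  have gc': "continuous_on UNIV (\<lambda>x. - g x)" using gc by (intro continuous_intros)
  have loc': "\<exists>r>0. \<forall>z\<in>ball x r. - g z = - g x" if "x \<notin> C" for x using loc[OF that] by auto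
  have wC': "\<exists>\<rho>>0. wild (\<lambda>x. arctan (- F x)) (cball c \<rho>) e" if cC: "c \<in> C" "e > 0" for c e
  proof -
    obtain \<rho> where "\<rho> > 0" "wild (\<lambda>x. arctan (F x)) (cball c \<rho>) e" using wC[OF cC] by blast
    then show ?thesis using wild_neg[of "\<lambda>x. arctan (F x)"] by (auto simp: arctan_minus)
  qed
  show "connected ((\<lambda>x. F x + g x) ` S)"
    unfolding is_interval_connected_1[symmetric] is_interval_1
  proof (intro ballI allI impI)
    fix a b v assume a: "a \<in> (\<lambda>x. F x + g x) ` S" and b: "b \<in> (\<lambda>x. F x + g x) ` S"
      and v: "a \<le> v \<and> v \<le> b"
    obtain s where s: "s \<in> S" "a = F s + g s" using a by blast
    obtain t where t: "t \<in> S" "b = F t + g t" using b by blast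
    show "v \<in> (\<lambda>x. F x + g x) ` S"
    proof (rule ccontr)
      assume nv: "v \<notin> (\<lambda>x. F x + g x) ` S"
      define lo where "lo = min s t"
      define hi where "hi = max s t"
      have KS: "{lo..hi} \<subseteq> S" unfolding lo_def hi_def
        using connected_contains_Icc[OF S] s(1) t(1) by (cases "s \<le> t") (auto simp: min_def max_def)
      have nK: "\<forall>x\<in>{lo..hi}. F x + g x \<noteq> v" using nv KS by force
      have nK': "\<forall>x\<in>{lo..hi}. - F x + - g x \<noteq> - v" using nK by auto
      have "F s + g s \<noteq> v" using nv s(1) image_eqI[of v "\<lambda>x. F x + g x" s S] by auto
      then have sv: "F s + g s < v" using v s(2) by linarith
      have "F t + g t \<noteq> v" using nv t(1) image_eqI[of v "\<lambda>x. F x + g x" t S] by auto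
      then have tv: "v < F t + g t" using v t(2) by linarith
      define E1 where "E1 = {x\<in>{lo..hi}. F x + g x < v}"
      define E2 where "E2 = {x\<in>{lo..hi}. v < F x + g x}"
      have o1: "openin (top_of_set {lo..hi}) E1"
        unfolding openin_euclidean_subtopology_iff
      proof (intro conjI ballI)
        show "E1 \<subseteq> {lo..hi}" unfolding E1_def by auto
      next
        fix p assume "p \<in> E1"
        then have p: "p \<in> {lo..hi}" "F p + g p < v" unfolding E1_def by auto
        obtain r where "r > 0" "\<forall>w\<in>{lo..hi}. dist w p < r \<longrightarrow> F w + g w < v"
          using key_open[OF dF gc loc nd wC nK p] by blast
        then show "\<exists>e>0. \<forall>x'\<in>{lo..hi}. dist x' p < e \<longrightarrow> x' \<in> E1" unfolding E1_def by auto
      qed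
      have o2: "openin (top_of_set {lo..hi}) E2"
        unfolding openin_euclidean_subtopology_iff
      proof (intro conjI ballI)
        show "E2 \<subseteq> {lo..hi}" unfolding E2_def by auto
      next
        fix p assume "p \<in> E2"
        then have p: "p \<in> {lo..hi}" "- F p + - g p < - v" unfolding E2_def by auto
        obtain r where r: "r > 0" "\<forall>w\<in>{lo..hi}. dist w p < r \<longrightarrow> - F w + - g w < - v"
          using key_open[OF dF' gc' loc' nd wC' nK' p] by blast
        have "\<forall>w\<in>{lo..hi}. dist w p < r \<longrightarrow> v < F w + g w"
        proof (intro ballI impI)
          fix w assume "w \<in> {lo..hi}" "dist w p < r"
          then have "- F w + - g w < - v" using r(2) by blast
          then show "v < F w + g w" by linarith
        qed
        then show "\<exists>e>0. \<forall>x'\<in>{lo..hi}. dist x' p < e \<longrightarrow> x' \<in> E2" using r(1) unfolding E2_def by auto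
      qed
      have "s \<in> E1" "t \<in> E2" using sv tv unfolding E1_def E2_def lo_def hi_def by auto
      moreover have "{lo..hi} \<subseteq> E1 \<union> E2" using nK unfolding E1_def E2_def by force
      moreover have "E1 \<inter> E2 = {}" unfolding E1_def E2_def by auto
      ultimately show False using o1 o2 connected_Icc[of lo hi] unfolding connected_openin by blast
    qed
  qed
qed

theorem mainTheorem1:
  fixes F :: "real \<Rightarrow> real"
  assumes "darboux F"
  shows "\<exists>g :: real \<Rightarrow> real. continuous_on UNIV g \<and> \<not> (\<exists>c. \<forall>x. g x = c)
           \<and> darboux (\<lambda>x. F x + g x)"
proof -
  define h where "h x = arctan (F x)" for x
  have hb: "\<bar>h x\<bar> < pi/2" for x unfolding h_def using arctan_bounded[of "F x"] by auto
  define q where "q n = from_nat_into (\<rat>::real set) n" for n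
  define U where "U n = Wset h (1 / real (Suc n)) - {q n}" for n
  have good: "goodU U"
    unfolding goodU_def
  proof (intro conjI allI impI)
    fix n show "open (U n)" unfolding U_def by (intro open_Diff open_Wset) auto
  next
    fix n and a b :: real assume ab: "a < b"
    have e: "1 / real (Suc n) > 0" by simp
    obtain x where x: "a < x" "x < b" "x \<in> Wset h (1 / real (Suc n))"
      using dense_Wset[of h, OF hb e ab] by blast
    show "\<exists>x. a < x \<and> x < b \<and> x \<in> U n"
    proof (cases "x = q n")
      case False then show ?thesis using x unfolding U_def by blast
    next
      case True
      obtain x' where x': "a < x'" "x' < x" "x' \<in> Wset h (1 / real (Suc n))"
        using dense_Wset[of h, OF hb e x(1)] by blast
      then show ?thesis using x True unfolding U_def by (intro exI[of _ x']) auto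
    qed
  qed
  obtain C and g :: "real \<Rightarrow> real" where C: "closed C" "\<forall>n. C \<subseteq> U n" "continuous_on UNIV g"
    "\<exists>a b. g a \<noteq> g b" "\<forall>x. x \<notin> C \<longrightarrow> (\<exists>r>0. \<forall>z\<in>ball x r. g z = g x)"
    using cantor_exists[OF good] by blast
  have nd: "\<exists>x. a < x \<and> x < b \<and> x \<notin> C" if ab: "a < b" for a b
  proof -
    obtain r where r: "r \<in> \<rat>" "a < r" "r < b" using Rats_dense_in_real[OF ab] by blast
    obtain n where n: "q n = r" using from_nat_into_surj[OF countable_rat r(1)] unfolding q_def by blast
    have "r \<notin> U n" using n unfolding U_def by auto
    then have "r \<notin> C" using C(2) by blast
    then show ?thesis using r by blast
  qed
  have wC: "\<exists>\<rho>>0. wild (\<lambda>x. arctan (F x)) (cball c \<rho>) e" if c: "c \<in> C" and e: "e > 0" for c e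
  proof -
    obtain n where n: "n > 0" "inverse (real n) < e" using ex_inverse_of_nat_less[OF e] by blast
    have "c \<in> U n" using C(2) c by blast
    then obtain \<rho> where \<rho>: "\<rho> > 0" "wild h (cball c \<rho>) (1 / real (Suc n))" unfolding U_def Wset_def by blast
    have "1 / real (Suc n) \<le> e" using n by (smt (verit) frac_le of_nat_0_less_iff of_nat_Suc inverse_eq_divide)
    then have "wild h (cball c \<rho>) e" using wild_mono[OF \<rho>(2)] by blast
    then show ?thesis using \<rho>(1) unfolding h_def by blast
  qed
  have "darboux (\<lambda>x. F x + g x)"
    by (rule darboux_sum[OF assms C(3) _ nd wC]) (use C(5) in blast)+
  moreover have "\<not> (\<exists>c. \<forall>x. g x = c)" using C(4) by metis
  ultimately show ?thesis using C(3) by blast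
qed

end
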